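(* (a) Let $\beta$ be an irrational real number and let $w\in\{\mathrm{N},\mathrm{E}\}^*$ be a $\beta$-Dyck word. Then $\mathrm{sw}_\beta(w)$ is a $\beta$-Dyck word. (b) Let $r,s\in\mathbb{Z}$ and let $w\in\{\mathrm{N},\mathrm{E}\}^*$ be an $(r,s)$-Dyck word. Then $\mathrm{sw}^-_{r,s}(w)$ is an $(r,s)$-Dyck word.
   Context: $\{\mathrm{N},\mathrm{E}\}^*$ is the set of finite words over the letters $\mathrm{N},\mathrm{E}$. A word $w=w_1\cdots w_n$ is identified with the lattice path starting at $(0,0)$ whose $i$-th step is a unit north step if $w_i=\mathrm{N}$ and a unit east step if $w_i=\mathrm{E}$. Each step is thought of as a "wand" whose tip is the endpoint of the step. For integers $r,s$, the $(r,s)$-level of a lattice point $(x,y)$ is $ry+sx$. Under the east-north convention, the level $l_i$ of the letter $w_i$ is the $(r,s)$-level of the endpoint of the $i$-th step; equivalently $l_0=0$ and $l_i=l_{i-1}+r$ if $w_i=\mathrm{N}$, $l_i=l_{i-1}+s$ if $w_i=\mathrm{E}$. A word $w$ is an $(r,s)$-Dyck word if all its letters have nonnegative level, i.e. $l_i\ge 0$ for $1\le i\le n$. The sweep map $\mathrm{sw}^-_{r,s}:\{\mathrm{N},\mathrm{E}\}^*\to\{\mathrm{N},\mathrm{E}\}^*$ sends $w$ to the word obtained as follows: start with the empty word; for $k=-1,-2,-3,\ldots$ and then for $k=\ldots,3,2,1,0$ (i.e. first all negative values in decreasing order, then all nonnegative values in decreasing order), scan $w$ from right to left and append each letter $w_i$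 ($1\le i\le n$) with $l_i=k$. For irrational $\beta$, the level of a step is $y-\beta x$ where $(x,y)$ is the endpoint (tip) of the step; distinct steps have distinct such levels. The irrational sweep map $\mathrm{sw}_\beta(w)$ lists the letters of $w$ in the order in which a line $y-\beta x=k$ hits their tips as $k$ decreases from just below $0$ to $-\infty$ and then from $+\infty$ down to $0$; i.e., first the letters with negative level in decreasing order of level, then the letters with positive level in decreasing order of level. A word $w$ is a $\beta$-Dyck word if every lattice point $(x,y)$ visited by its path satisfies $y-\beta x\ge 0$. *)

theory Defs
  imports Complex_Main
begin

datatype letter = N | E

definition cntN :: "letter list \<Rightarrow> nat" where
  "cntN xs = length (filter (\<lambda>c. c = N) xs)"

definition cntE :: "letter list \<Rightarrow> nat" where
  "cntE xs = length (filter (\<lambda>c. c = E) xs)"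

text \<open>(r,s)-level of the i-th letter (1-based) = level of the endpoint of the i-th step;
  index 0 gives the origin.\<close>
definition rs_level :: "int \<Rightarrow> int \<Rightarrow> letter list \<Rightarrow> nat \<Rightarrow> int" where
  "rs_level r s w i = r * int (cntN (take i w)) + s * int (cntE (take i w))"

definition rs_dyck :: "int \<Rightarrow> int \<Rightarrow> letter list \<Rightarrow> bool" where
  "rs_dyck r s w \<longleftrightarrow> (\<forall>i\<in>{1..length w}. rs_level r s w i \<ge> 0)"

text \<open>Sweep map sw^-_{r,s}: for k = -1,-2,...,-M and then k = M,...,1,0, scan w from right
  to left and append the letters of level k. M bounds all absolute levels.\<close>
definition sweep_rs :: "int \<Rightarrow> int \<Rightarrow> letter list \<Rightarrow> letter list" where
  "sweep_rs r s w =
    (let n = length w; M = int n * (\<bar>r\<bar> + \<bar>s\<bar>);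
         letters = (\<lambda>k. [w ! (i - 1). i \<leftarrow> rev [1..<n+1], rs_level r s w i = k])
     in concat (map letters (rev [-M..-1] @ rev [0..M])))"

definition beta_level :: "real \<Rightarrow> letter list \<Rightarrow> nat \<Rightarrow> real" where
  "beta_level \<beta> w i = real (cntN (take i w)) - \<beta> * real (cntE (take i w))"

definition beta_dyck :: "real \<Rightarrow> letter list \<Rightarrow> bool" where
  "beta_dyck \<beta> w \<longleftrightarrow> (\<forall>i\<le>length w. beta_level \<beta> w i \<ge> 0)"

definition sweep_beta :: "real \<Rightarrow> letter list \<Rightarrow> letter list" where
  "sweep_beta \<beta> w =
    (let n = length w; lv = beta_level \<beta> w; idx = [1..<n+1]
     in map (\<lambda>i. w ! (i - 1))
          (sort_key (\<lambda>i. - lv i) (filter (\<lambda>i. lv i < 0) idx)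
           @ sort_key (\<lambda>i. - lv i) (filter (\<lambda>i. lv i > 0) idx)))"

end

theory Submission
  imports Defs
begin

definition gl :: "'a::linordered_idom \<Rightarrow> 'a \<Rightarrow> letter list \<Rightarrow> nat \<Rightarrow> 'a" where
  "gl a b w i = a * of_nat (cntN (take i w)) + b * of_nat (cntE (take i w))"

lemma telescope:
  fixes h :: "nat \<Rightarrow> 'a::ab_group_add"
  shows "(\<Sum>i\<in>{1..n}. h i - h (i-1)) = h n - h 0"
  by (induction n) (auto simp: atLeastAtMostSuc_conv)

lemma key:
  fixes f :: "nat \<Rightarrow> 'a::linordered_ab_group_add"
  assumes f0: "f 0 = 0" and S: "S \<subseteq> {1..n}" and k: "k \<ge> 0"
    and inS: "\<forall>i\<in>S. f i \<ge> k" and outS: "\<forall>i\<in>{1..n}-S. f i \<le> k"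
  shows "(\<Sum>i\<in>S. f i - f (i-1)) \<ge> 0"
proof -
  define g where "g x = max x k" for x
  have tot: "(\<Sum>i\<in>{1..n}. g (f i) - g (f (i-1))) = g (f n) - g (f 0)"
    by (rule telescope)
  have "g (f n) - g (f 0) \<ge> 0" using f0 k by (simp add: g_def)
  have split: "(\<Sum>i\<in>{1..n}. g (f i) - g (f (i-1))) =
     (\<Sum>i\<in>S. g (f i) - g (f (i-1))) + (\<Sum>i\<in>{1..n}-S. g (f i) - g (f (i-1)))"
    using S by (metis (no_types, lifting) add.commute finite_atLeastAtMost sum.subset_diff)
  have rest: "(\<Sum>i\<in>{1..n}-S. g (f i) - g (f (i-1))) \<le> 0"
    by (rule sum_nonpos) (use outS in \<open>auto simp: g_def\<close>)
  have mono: "(\<Sum>i\<in>S. g (f i) - g (f (i-1))) \<le> (\<Sum>i\<in>S. f i - f (i-1))"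
    by (rule sum_mono) (use inS in \<open>auto simp: g_def\<close>)
  have "0 \<le> (\<Sum>i\<in>S. g (f i) - g (f (i-1))) + (\<Sum>i\<in>{1..n}-S. g (f i) - g (f (i-1)))"
    using tot \<open>g (f n) - g (f 0) \<ge> 0\<close> split by metis
  also have "\<dots> \<le> (\<Sum>i\<in>S. g (f i) - g (f (i-1)))" using rest by (simp add: add_le_same_cancel1)
  also have "\<dots> \<le> (\<Sum>i\<in>S. f i - f (i-1))" by (rule mono)
  finally show ?thesis .
qed

lemma prefix_nonneg:
  fixes f :: "nat \<Rightarrow> 'a::linordered_ab_group_add"
  assumes f0: "f 0 = 0" and sorted: "sorted_wrt (\<lambda>x y. f y \<le> f x) L"
    and sub: "set L \<subseteq> {1..n}" and nonneg: "\<forall>i\<in>set L. f i \<ge> 0"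
    and out: "\<forall>i\<in>{1..n}-set L. f i \<le> 0"
  shows "(\<Sum>i\<in>set (take j L). f i - f (i-1)) \<ge> 0"
proof (cases "take j L = []")
  case True then show ?thesis by (metis empty_set sum.empty order_refl)
next
  case False
  define j' where "j' = min j (length L)"
  have j': "j' \<ge> 1" "j' \<le> length L" "j' \<le> j" using False by (auto simp: j'_def Suc_le_eq)
  define k where "k = f (L ! (j'-1))"
  have k0: "k \<ge> 0" using nonneg j' by (simp add: k_def)
  show ?thesis
  proof (rule key[where k=k and n=n and f=f])
    show "f 0 = 0" by (rule f0)
    show "0 \<le> k" by (rule k0)
    show "set (take j L) \<subseteq> {1..n}" using sub set_take_subset by (rule order_trans[rotated])
    show "\<forall>i\<in>set (take j L). k \<le> f i"
    proof
      fix i assume "i \<in> set (take j L)"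
      then obtain a where a: "a < length (take j L)" "i = take j L ! a"
        by (auto simp: in_set_conv_nth)
      have "a \<le> j' - 1" "a < length L" using a by (auto simp: j'_def)
      hence "i = L ! a" using a by simp
      show "k \<le> f i"
      proof (cases "a = j'-1")
        case True then show ?thesis using \<open>i = L ! a\<close> k_def by simp
      next
        case False
        hence "a < j' - 1" using \<open>a \<le> j' - 1\<close> by simp
        with sorted_wrt_nth_less[OF sorted this] j' show ?thesis
          using \<open>i = L ! a\<close> k_def by simp
      qed
    qed
    show "\<forall>i\<in>{1..n} - set (take j L). f i \<le> k"
    proof
      fix i assume i: "i \<in> {1..n} - set (take j L)"
      show "f i \<le> k"
      proof (cases "i \<in> set L")
        case False
        hence "i \<in> {1..n} - set L" using i by blast
        hence "f i \<le> 0" using out by blast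
        then show ?thesis using k0 by (rule order_trans)
      next
        case True
        hence "i \<in> set (drop j L)" using i
          by (metis DiffD2 Un_iff append_take_drop_id set_append)
        then obtain m where m: "m < length (drop j L)" "i = drop j L ! m"
          by (auto simp: in_set_conv_nth)
        hence "i = L ! (j + m)" "j + m < length L" by auto
        moreover have "j' - 1 < j + m" using j' by simp
        ultimately show ?thesis using sorted_wrt_nth_less[OF sorted] k_def by simp
      qed
    qed
  qed
qed

lemma cntN_Cons: "cntN (x # xs) = cntN xs + (if x = N then 1 else 0)"
  by (simp add: cntN_def)
lemma cntE_Cons: "cntE (x # xs) = cntE xs + (if x = E then 1 else 0)"
  by (simp add: cntE_def)
lemma cntN_snoc: "cntN (xs @ [x]) = cntN xs + (if x = N then 1 else 0)"
  by (simp add: cntN_def)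
lemma cntE_snoc: "cntE (xs @ [x]) = cntE xs + (if x = E then 1 else 0)"
  by (simp add: cntE_def)

lemma letter_not_N: "x \<noteq> N \<longleftrightarrow> x = E" by (cases x) auto

lemma gl_step:
  assumes "1 \<le> i" "i \<le> length w"
  shows "gl a b w i - gl a b w (i-1) = (if w!(i-1) = N then a else b)"
proof -
  have "take i w = take (i-1) w @ [w!(i-1)]"
    using assms take_Suc_conv_app_nth[of "i-1" w] by simp
  then show ?thesis
    by (cases "w!(i-1)") (simp_all add: gl_def cntN_snoc cntE_snoc algebra_simps)
qed

lemma gl_map:
  assumes "distinct p"
  shows "a * of_nat (cntN (map g p)) + b * of_nat (cntE (map g p))
     = (\<Sum>i\<in>set p. if g i = N then a else (b::'a::linordered_idom))"
  using assms
proof (induction p)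
  case Nil then show ?case by (simp add: cntN_def cntE_def)
next
  case (Cons x p)
  then show ?case by (cases "g x") (simp_all add: cntN_Cons cntE_Cons distrib_left add_ac)
qed

lemma gl_out:
  assumes "distinct L" "set L \<subseteq> {1..length w}"
  shows "gl a b (map (\<lambda>i. w!(i-1)) L) j = (\<Sum>i\<in>set (take j L). gl a b w i - gl a b w (i-1))"
proof -
  have "gl a b (map (\<lambda>i. w!(i-1)) L) j = a * of_nat (cntN (map (\<lambda>i. w!(i-1)) (take j L)))
      + b * of_nat (cntE (map (\<lambda>i. w!(i-1)) (take j L)))"
    unfolding gl_def take_map by simp
  also have "\<dots> = (\<Sum>i\<in>set (take j L). if w!(i-1) = N then a else b)"
    by (rule gl_map) (rule distinct_take, rule assms(1))
  also have "\<dots> = (\<Sum>i\<in>set (take j L). gl a b w i - gl a b w (i-1))"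
  proof (rule sum.cong[OF refl])
    fix i assume "i \<in> set (take j L)"
    hence "i \<in> set L" by (rule in_set_takeD)
    hence "i \<in> {1..length w}" using assms(2) by blast
    then show "(if w!(i-1) = N then a else b) = gl a b w i - gl a b w (i-1)"
      using gl_step[of i w a b] by simp
  qed
  finally show ?thesis .
qed

lemma out_dyck:
  fixes a b :: "'a::linordered_idom"
  assumes "distinct L" "set L \<subseteq> {1..length w}"
    and "sorted_wrt (\<lambda>x y. gl a b w y \<le> gl a b w x) L"
    and "\<forall>i\<in>set L. gl a b w i \<ge> 0"
    and "\<forall>i\<in>{1..length w}-set L. gl a b w i \<le> 0"
  shows "gl a b (map (\<lambda>i. w!(i-1)) L) j \<ge> 0"
  unfolding gl_out[OF assms(1,2)]
  by (rule prefix_nonneg[OF _ assms(3,2,4,5)]) (simp add: gl_def cntN_def cntE_def)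

lemma beta_gl: "beta_level \<beta> w i = gl 1 (-\<beta>) w i"
  by (simp add: beta_level_def gl_def)

lemma rs_gl: "rs_level r s w i = gl r s w i"
  by (simp add: rs_level_def gl_def)

lemma cnt_le: "cntN (take i w) \<le> length w" "cntE (take i w) \<le> length w"
  unfolding cntN_def cntE_def
  using length_filter_le[of _ "take i w"] by (simp_all add: le_trans)

lemma partA:
  assumes "beta_dyck \<beta> w"
  shows "beta_dyck \<beta> (sweep_beta \<beta> w)"
proof -
  let ?lv = "beta_level \<beta> w"
  let ?n = "length w"
  have nn: "\<forall>i\<le>?n. ?lv i \<ge> 0" using assms by (simp add: beta_dyck_def)
  have neg: "filter (\<lambda>i. ?lv i < 0) [1..<?n+1] = []"
  proof -
    { fix x assume "x \<in> set [1..<?n+1]"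
      hence "x \<le> ?n" by auto
      hence "\<not> ?lv x < 0" using nn by (simp add: not_less) }
    thus ?thesis by (simp add: filter_empty_conv)
  qed
  define L where "L = sort_key (\<lambda>i. - ?lv i) (filter (\<lambda>i. ?lv i > 0) [1..<?n+1])"
  have sw: "sweep_beta \<beta> w = map (\<lambda>i. w!(i-1)) L"
    unfolding sweep_beta_def L_def Let_def neg by simp
  have dist: "distinct L" by (simp add: L_def)
  have setL: "set L = {i\<in>{1..?n}. ?lv i > 0}" by (auto simp: L_def)
  have sorted: "sorted_wrt (\<lambda>x y. gl 1 (-\<beta>) w y \<le> gl 1 (-\<beta>) w x) L"
  proof -
    have "sorted (map (\<lambda>i. - ?lv i) L)" by (simp add: L_def)
    then show ?thesis by (simp add: sorted_map beta_gl)
  qed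
  have "\<forall>j. gl 1 (-\<beta>) (map (\<lambda>i. w!(i-1)) L) j \<ge> 0"
  proof
    fix j show "gl 1 (-\<beta>) (map (\<lambda>i. w!(i-1)) L) j \<ge> 0"
      by (rule out_dyck[OF dist _ sorted]) (use setL nn in \<open>auto simp: beta_gl\<close>)
  qed
  then show ?thesis unfolding beta_dyck_def sw beta_gl by simp
qed

lemma comp_filter: "[f i. i \<leftarrow> xs, P i] = map f (filter P xs)"
  by (induction xs) auto

lemma sw_const: "sorted_wrt (\<lambda>x y. (lv::nat\<Rightarrow>int) y \<le> lv x) (filter (\<lambda>i. lv i = k) xs)"
  by (induction xs) auto

lemma concat_filter_sorted:
  assumes "sorted_wrt (>) ks"
  shows "sorted_wrt (\<lambda>x y. (lv::nat\<Rightarrow>int) y \<le> lv x) (concat (map (\<lambda>k. filter (\<lambda>i. lv i = k) xs) ks))"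
  using assms
proof (induction ks)
  case Nil then show ?case by simp
next
  case (Cons k ks)
  then show ?case by (auto simp: sorted_wrt_append sw_const)
qed

lemma concat_filter_distinct:
  assumes "distinct ks" "distinct xs"
  shows "distinct (concat (map (\<lambda>k. filter (\<lambda>i. (lv::nat\<Rightarrow>int) i = k) xs) ks))"
  using assms by (induction ks) auto

lemma partB:
  assumes "rs_dyck r s w"
  shows "rs_dyck r s (sweep_rs r s w)"
proof -
  let ?lv = "rs_level r s w"
  let ?n = "length w"
  define M where "M = int ?n * (\<bar>r\<bar> + \<bar>s\<bar>)"
  have nn: "\<forall>i\<in>{1..?n}. ?lv i \<ge> 0" using assms by (simp add: rs_dyck_def)
  have bd: "?lv i \<le> M" for i
  proof -
    have "r * int (cntN (take i w)) \<le> \<bar>r\<bar> * int ?n"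
    proof -
      have c: "int (cntN (take i w)) \<le> int ?n" using cnt_le(1) by simp
      have "r * int (cntN (take i w)) \<le> \<bar>r\<bar> * int (cntN (take i w))" by (rule mult_right_mono) auto
      also have "\<dots> \<le> \<bar>r\<bar> * int ?n" by (rule mult_left_mono[OF c]) simp
      finally show ?thesis .
    qed
    moreover have "s * int (cntE (take i w)) \<le> \<bar>s\<bar> * int ?n"
    proof -
      have c: "int (cntE (take i w)) \<le> int ?n" using cnt_le(2) by simp
      have "s * int (cntE (take i w)) \<le> \<bar>s\<bar> * int (cntE (take i w))" by (rule mult_right_mono) auto
      also have "\<dots> \<le> \<bar>s\<bar> * int ?n" by (rule mult_left_mono[OF c]) simp
      finally show ?thesis .
    qed
    ultimately show ?thesis by (simp add: rs_level_def M_def algebra_simps)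
  qed
  define F where "F k = filter (\<lambda>i. ?lv i = k) (rev [1..<?n+1])" for k
  define L where "L = concat (map F (rev [0..M]))"
  have negE: "concat (map (\<lambda>k. map h (F k)) (rev [-M..-1])) = []" for h :: "nat \<Rightarrow> letter"
  proof -
    { fix k assume "k \<in> set (rev [-M..-1])"
      hence "k < 0" by simp
      have "F k = []" unfolding F_def filter_empty_conv
      proof
        fix x assume "x \<in> set (rev [1..<?n+1])"
        hence "x \<in> {1..?n}" by auto
        hence "?lv x \<ge> 0" using nn by blast
        thus "\<not> ?lv x = k" using \<open>k < 0\<close> by simp
      qed }
    thus ?thesis by simp
  qed
  have sw: "sweep_rs r s w = map (\<lambda>i. w!(i-1)) L"
    unfolding sweep_rs_def Let_def comp_filter M_def[symmetric] F_def[symmetric]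
    by (simp add: negE L_def map_concat comp_def)
  have dist: "distinct L" unfolding L_def F_def
    by (rule concat_filter_distinct) auto
  have setL: "set L = {1..?n}" using nn bd by (auto simp: L_def F_def)
  have sorted: "sorted_wrt (\<lambda>x y. gl r s w y \<le> gl r s w x) L"
  proof -
    have "sorted_wrt (>) (rev [0..M])" by (simp add: sorted_wrt_rev sorted_wrt_upto)
    from concat_filter_sorted[OF this, where lv="?lv" and xs="rev [1..<?n+1]"]
    show ?thesis unfolding L_def F_def rs_gl .
  qed
  have "\<forall>j. gl r s (map (\<lambda>i. w!(i-1)) L) j \<ge> 0"
  proof
    fix j show "gl r s (map (\<lambda>i. w!(i-1)) L) j \<ge> 0"
      by (rule out_dyck[OF dist _ sorted]) (use setL nn in \<open>auto simp: rs_gl\<close>)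
  qed
  then show ?thesis unfolding rs_dyck_def sw rs_gl by simp
qed

theorem mainTheorem1:
  shows "(\<forall>(\<beta>::real) w. \<beta> \<notin> \<rat> \<longrightarrow> beta_dyck \<beta> w \<longrightarrow> beta_dyck \<beta> (sweep_beta \<beta> w))
       \<and> (\<forall>(r::int) (s::int) w. rs_dyck r s w \<longrightarrow> rs_dyck r s (sweep_rs r s w))"
  using partA partB by blast

end
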